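(* Let $\mathfrak g$ be a real almost abelian Lie algebra with $\dim\mathfrak g\ge 6$. Then every LCS structure $(\omega,\theta)$ on $\mathfrak g$ is of the second kind.
   Context: An almost abelian Lie algebra is a real Lie algebra with an abelian ideal of codimension one. An LCS structure on $\mathfrak g$ is a pair $(\omega,\theta)$ with $\omega\in\Lambda^2\mathfrak g^*$ non-degenerate and $\theta\in\mathfrak g^*$ closed and nonzero, such that $d\omega=\theta\wedge\omega$. Let $\mathfrak g_\omega=\{x\in\mathfrak g:\ \omega([x,y],z)+\omega(y,[x,z])=0\ \text{for all }y,z\in\mathfrak g\}$ (a Lie subalgebra). The LCS structure is of the first kind if $\theta|_{\mathfrak g_\omega}$ is surjective onto $\mathbb R$, and of the second kind if $\theta|_{\mathfrak g_\omega}\equiv0$. *)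

theory Defs
  imports "HOL-Analysis.Analysis"
begin

definition lie_algebra :: "('a::euclidean_space \<Rightarrow> 'a \<Rightarrow> 'a) \<Rightarrow> bool" where
  "lie_algebra br \<longleftrightarrow> bilinear br \<and> (\<forall>x. br x x = 0) \<and>
     (\<forall>x y z. br x (br y z) + br y (br z x) + br z (br x y) = 0)"

definition almost_abelian :: "('a::euclidean_space \<Rightarrow> 'a \<Rightarrow> 'a) \<Rightarrow> bool" where
  "almost_abelian br \<longleftrightarrow> lie_algebra br \<and>
     (\<exists>h. subspace h \<and> dim h + 1 = DIM('a) \<and>
          (\<forall>x\<in>h. \<forall>y. br x y \<in> h) \<and> (\<forall>x\<in>h. \<forall>y\<in>h. br x y = 0))"

definition d1 :: "('a \<Rightarrow> 'a \<Rightarrow> 'a) \<Rightarrow> ('a \<Rightarrow> real) \<Rightarrow> 'a \<Rightarrow> 'a \<Rightarrow> real" where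
  "d1 br \<theta> x y = - \<theta> (br x y)"

definition d2 :: "('a \<Rightarrow> 'a \<Rightarrow> 'a) \<Rightarrow> ('a \<Rightarrow> 'a \<Rightarrow> real) \<Rightarrow> 'a \<Rightarrow> 'a \<Rightarrow> 'a \<Rightarrow> real" where
  "d2 br \<omega> x y z = - \<omega> (br x y) z + \<omega> (br x z) y - \<omega> (br y z) x"

definition wedge12 :: "('a \<Rightarrow> real) \<Rightarrow> ('a \<Rightarrow> 'a \<Rightarrow> real) \<Rightarrow> 'a \<Rightarrow> 'a \<Rightarrow> 'a \<Rightarrow> real" where
  "wedge12 \<theta> \<omega> x y z = \<theta> x * \<omega> y z - \<theta> y * \<omega> x z + \<theta> z * \<omega> x y"

definition two_form :: "('a::real_vector \<Rightarrow> 'a \<Rightarrow> real) \<Rightarrow> bool" where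
  "two_form \<omega> \<longleftrightarrow> bilinear \<omega> \<and> (\<forall>x. \<omega> x x = 0)"

definition nondegenerate :: "('a::real_vector \<Rightarrow> 'a \<Rightarrow> real) \<Rightarrow> bool" where
  "nondegenerate \<omega> \<longleftrightarrow> (\<forall>x. (\<forall>y. \<omega> x y = 0) \<longrightarrow> x = 0)"

definition LCS :: "('a::euclidean_space \<Rightarrow> 'a \<Rightarrow> 'a) \<Rightarrow> ('a \<Rightarrow> 'a \<Rightarrow> real) \<Rightarrow> ('a \<Rightarrow> real) \<Rightarrow> bool" where
  "LCS br \<omega> \<theta> \<longleftrightarrow> two_form \<omega> \<and> nondegenerate \<omega> \<and>
     linear \<theta> \<and> d1 br \<theta> = (\<lambda>x y. 0) \<and> \<theta> \<noteq> (\<lambda>x. 0) \<and>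
     d2 br \<omega> = wedge12 \<theta> \<omega>"

definition g_omega :: "('a \<Rightarrow> 'a \<Rightarrow> 'a) \<Rightarrow> ('a \<Rightarrow> 'a \<Rightarrow> real) \<Rightarrow> 'a set" where
  "g_omega br \<omega> = {x. \<forall>y z. \<omega> (br x y) z + \<omega> y (br x z) = 0}"

definition LCS_first_kind :: "('a \<Rightarrow> 'a \<Rightarrow> 'a) \<Rightarrow> ('a \<Rightarrow> 'a \<Rightarrow> real) \<Rightarrow> ('a \<Rightarrow> real) \<Rightarrow> bool" where
  "LCS_first_kind br \<omega> \<theta> \<longleftrightarrow> \<theta> ` g_omega br \<omega> = UNIV"

definition LCS_second_kind :: "('a \<Rightarrow> 'a \<Rightarrow> 'a) \<Rightarrow> ('a \<Rightarrow> 'a \<Rightarrow> real) \<Rightarrow> ('a \<Rightarrow> real) \<Rightarrow> bool" where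
  "LCS_second_kind br \<omega> \<theta> \<longleftrightarrow> (\<forall>x\<in>g_omega br \<omega>. \<theta> x = 0)"

end

theory Submission
  imports Defs
begin

lemma functional_rep:
  fixes f :: "'a::euclidean_space \<Rightarrow> real"
  assumes "linear f"
  shows "\<exists>a. \<forall>y. f y = a \<bullet> y"
proof -
  have "\<forall>y. f y = adjoint f 1 \<bullet> y"
    using adjoint_works[OF assms, of _ 1] by (simp add: inner_commute)
  then show ?thesis by blast
qed

theorem corollary4p3:
  fixes br :: "'a::euclidean_space \<Rightarrow> 'a \<Rightarrow> 'a"
    and \<omega> :: "'a \<Rightarrow> 'a \<Rightarrow> real" and \<theta> :: "'a \<Rightarrow> real"
  assumes "almost_abelian br"
    and "DIM('a) \<ge> 6"
    and "LCS br \<omega> \<theta>"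
  shows "LCS_second_kind br \<omega> \<theta>"
  unfolding LCS_second_kind_def
proof (rule ballI, rule ccontr)
  fix x assume xg: "x \<in> g_omega br \<omega>" and tx: "\<theta> x \<noteq> 0"
  obtain h where hs: "subspace h" and hd: "dim h + 1 = DIM('a)"
    and hab: "\<forall>x\<in>h. \<forall>y\<in>h. br x y = 0"
    using assms(1) unfolding almost_abelian_def by blast
  have bil: "bilinear \<omega>" and alt: "\<And>u. \<omega> u u = 0" and nd: "nondegenerate \<omega>"
    and lt: "linear \<theta>" and dd: "d2 br \<omega> = wedge12 \<theta> \<omega>"
    using assms(3) unfolding LCS_def two_form_def by auto
  have lin2: "\<And>u. linear (\<omega> u)" and lin1: "\<And>v. linear (\<lambda>u. \<omega> u v)"
    using bil unfolding bilinear_def by auto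
  have skew: "\<And>u v. \<omega> u v = - \<omega> v u"
  proof -
    fix u v
    have "\<omega> (u+v) (u+v) = 0" by (rule alt)
    moreover have "\<omega> (u+v) (u+v) = \<omega> u u + \<omega> u v + \<omega> v u + \<omega> v v"
      using linear_add[OF lin2] linear_add[OF lin1] by simp
    ultimately show "\<omega> u v = - \<omega> v u" using alt by simp
  qed
  have w0: "\<And>u. \<omega> 0 u = 0" using linear_0[OF lin1] by simp
  have key: "\<theta> x * \<omega> y z - \<theta> y * \<omega> x z + \<theta> z * \<omega> x y = 0"
    if "y \<in> h" "z \<in> h" for y z
  proof -
    have g1: "\<omega> (br x y) z + \<omega> y (br x z) = 0" using xg unfolding g_omega_def by blast
    have "d2 br \<omega> x y z = 0"
      unfolding d2_def using hab that g1 w0 skew[of "br x z" y] by simp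
    then show ?thesis using dd unfolding wedge12_def by (metis)
  qed
  have "h \<noteq> UNIV"
  proof
    assume "h = UNIV"
    then have "dim h = DIM('a)" by simp
    then show False using hd by simp
  qed
  then obtain e where e: "e \<notin> h" by blast
  have "span (insert e h) = UNIV"
  proof -
    have "dim (insert e h) = DIM('a)"
      proof -
      have "e \<notin> span h" using e hs by (metis span_eq_iff)
      then show ?thesis using hd by (simp add: dim_insert)
    qed
    then show ?thesis by (metis dim_eq_full)
  qed
  then have U: "{x. \<exists>k. x - k *\<^sub>R e \<in> h} = UNIV"
    proof -
    have sh: "span h = h" using hs by (metis span_eq_iff)
    show ?thesis using \<open>span (insert e h) = UNIV\<close> unfolding span_insert sh .
  qed
  have decomp: "\<exists>k z. z \<in> h \<and> w = z + k *\<^sub>R e" for w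
  proof -
    have "w \<in> {x. \<exists>k. x - k *\<^sub>R e \<in> h}" using U by simp
    then obtain k where "w - k *\<^sub>R e \<in> h" by blast
    then show ?thesis by (metis diff_add_cancel)
  qed
  obtain a where a: "\<forall>y. \<theta> y = a \<bullet> y" using functional_rep[OF lt] by blast
  obtain b where b: "\<forall>y. \<omega> x y = b \<bullet> y" using functional_rep[OF lin2] by blast
  obtain c where c: "\<forall>y. \<omega> y e = c \<bullet> y" using functional_rep[OF lin1] by blast
  define A where "A = span {a, b, c}"
  define T where "T = {y. \<forall>v\<in>A. orthogonal v y}"
  have sT: "subspace T" unfolding T_def by (rule subspace_orthogonal_to_vectors)
  have sA: "subspace A" unfolding A_def by simp
  have "dim {y \<in> UNIV. \<forall>v \<in> A. orthogonal v y} + dim A = dim (UNIV::'a set)"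
    by (rule dim_subspace_orthogonal_to_vectors) (use sA in auto)
  then have dT: "dim T + dim A = DIM('a)" unfolding T_def by simp
  have "dim A \<le> card {a,b,c}" unfolding A_def dim_span
    by (rule dim_le_card) (auto intro: span_base)
  also have "card {a,b,c} \<le> 3" by (simp add: card_insert_le_m1)
  finally have dA: "dim A \<le> 3" .
  have ds: "dim {u + v |u v. u \<in> h \<and> v \<in> T} + dim (h \<inter> T) = dim h + dim T"
    by (rule dim_sums_Int[OF hs sT])
  have "dim {u + v |u v. u \<in> h \<and> v \<in> T} \<le> DIM('a)"
    by (rule dim_subset_UNIV)
  then have "dim (h \<inter> T) > 0" using ds dT dA hd assms(2) by linarith
  then obtain y where y: "y \<in> h" "y \<in> T" "y \<noteq> 0"
  proof -
    have "\<exists>y\<in>h \<inter> T. y \<noteq> 0" using \<open>dim (h \<inter> T) > 0\<close> dim_eq_0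
      by (metis neq0_conv singletonI subsetI)
    then show ?thesis using that by blast
  qed
  have ya: "\<theta> y = 0" and yb: "\<omega> x y = 0" and yc: "\<omega> y e = 0"
    using y(2) a b c unfolding T_def A_def orthogonal_def
    by (auto simp: span_base inner_commute)
  have yh: "\<omega> y z = 0" if "z \<in> h" for z
    using key[OF y(1) that] ya yb tx by simp
  have "\<forall>w. \<omega> y w = 0"
  proof
    fix w
    obtain k z where "z \<in> h" "w = z + k *\<^sub>R e" using decomp by blast
    then show "\<omega> y w = 0"
      using yh yc linear_add[OF lin2] linear_scale[OF lin2] by simp
  qed
  then have "y = 0" using nd unfolding nondegenerate_def by blast
  then show False using y(3) by simp
qed

end
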